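(* Let $n\ge 1$ and $\mathcal{P}=\{x\in\mathbb{R}^n : \tfrac12(\max_i x_i-\min_i x_i)\le 1\}$. The number of faces of $\mathcal{P}$ (including $\mathcal{P}$ itself) is $3^n-2^{n+1}+2$.
   Context: A face of a polyhedron $\mathcal{Q}\subseteq\mathbb{R}^n$ is a non-empty subset $F$ with either $F=\mathcal{Q}$ or $F=\mathcal{Q}\cap\{x: b^\top x=c\}$ for some $b\in\mathbb{R}^n$, $c\in\mathbb{R}$ with $b^\top x\le c$ for all $x\in\mathcal{Q}$. *)

theory Defs
  imports "HOL-Analysis.Analysis"
begin

definition poly_face :: "'a::real_inner set \<Rightarrow> 'a set \<Rightarrow> bool" where
  "poly_face Q F \<longleftrightarrow> F \<noteq> {} \<and>
     (F = Q \<or> (\<exists>b c. (\<forall>x\<in>Q. b \<bullet> x \<le> c) \<and> F = Q \<inter> {x. b \<bullet> x = c}))"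

definition range_poly :: "(real^'n) set" where
  "range_poly = {x. (Max (range (\<lambda>i. x $ i)) - Min (range (\<lambda>i. x $ i))) / 2 \<le> 1}"

end

theory Submission
  imports Defs
begin
definition G :: "'n set \<Rightarrow> 'n set \<Rightarrow> (real^'n) set" where
  "G S T = {x. \<exists>m. (\<forall>k. m \<le> x$k \<and> x$k \<le> m+2) \<and> (\<forall>i\<in>S. x$i = m+2) \<and> (\<forall>j\<in>T. x$j = m)}"

definition Mb :: "real^'n \<Rightarrow> real" where
  "Mb b = (\<Sum>k\<in>UNIV. if b$k > 0 then 2 * b$k else 0)"

lemma P_char: "x \<in> (range_poly :: (real^'n) set) \<longleftrightarrow> (\<exists>m. \<forall>k. m \<le> x$k \<and> x$k \<le> m+2)"
proof -
  let ?R = "range (\<lambda>i. x $ i)"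
  have fin: "finite ?R" by simp
  have ne: "?R \<noteq> {}" by simp
  show ?thesis
  proof
    assume "x \<in> range_poly"
    hence h: "Max ?R - Min ?R \<le> 2" unfolding range_poly_def by simp
    have "\<forall>k. Min ?R \<le> x$k \<and> x$k \<le> Min ?R + 2"
    proof
      fix k
      have "Min ?R \<le> x$k" "x$k \<le> Max ?R" using fin by auto
      thus "Min ?R \<le> x$k \<and> x$k \<le> Min ?R + 2" using h by linarith
    qed
    thus "\<exists>m. \<forall>k. m \<le> x$k \<and> x$k \<le> m+2" by blast
  next
    assume "\<exists>m. \<forall>k. m \<le> x$k \<and> x$k \<le> m+2"
    then obtain m where m: "\<forall>k. m \<le> x$k \<and> x$k \<le> m+2" by blast
    have "Max ?R \<le> m + 2" using fin ne m by (subst Max_le_iff) auto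
    moreover have "m \<le> Min ?R" using fin ne m by (subst Min_ge_iff) auto
    ultimately have "Max ?R - Min ?R \<le> 2" by linarith
    thus "x \<in> range_poly" unfolding range_poly_def by simp
  qed
qed

lemma G_sub: "G S T \<subseteq> range_poly"
  unfolding G_def using P_char by blast

lemma core:
  fixes b x :: "real^'n" and m :: real
  assumes s: "(\<Sum>k\<in>UNIV. b$k) = 0" and mb: "\<forall>k. m \<le> x$k \<and> x$k \<le> m+2"
  shows "b \<bullet> x \<le> Mb b"
    and "b \<bullet> x = Mb b \<longleftrightarrow> (\<forall>k. b$k > 0 \<longrightarrow> x$k = m+2) \<and> (\<forall>k. b$k < 0 \<longrightarrow> x$k = m)"
proof -
  define t where "t k = b$k * (x$k - m) - (if b$k > 0 then 2 * b$k else 0)" for k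
  have "(\<Sum>k\<in>UNIV. b$k * (x$k - m)) = (\<Sum>k\<in>UNIV. b$k * x$k) - m * (\<Sum>k\<in>UNIV. b$k)"
    by (simp add: algebra_simps sum_subtractf sum_distrib_left)
  hence e1: "(\<Sum>k\<in>UNIV. b$k * (x$k - m)) = b \<bullet> x" using s by (simp add: inner_vec_def)
  have e: "b \<bullet> x - Mb b = (\<Sum>k\<in>UNIV. t k)"
    unfolding t_def Mb_def sum_subtractf e1 ..
  have tn: "t k \<le> 0" for k
  proof (cases "b$k > 0")
    case True
    have "b$k * (x$k - m) \<le> b$k * 2" using mb True by (intro mult_left_mono) (auto simp: algebra_simps)
    thus ?thesis using True unfolding t_def by simp
  next
    case False
    have "b$k * (x$k - m) \<le> 0" using mb False by (intro mult_nonpos_nonneg) auto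
    thus ?thesis using False unfolding t_def by simp
  qed
  have "(\<Sum>k\<in>UNIV. t k) \<le> 0" using tn by (simp add: sum_nonpos)
  thus "b \<bullet> x \<le> Mb b" using e by linarith
  have "b \<bullet> x = Mb b \<longleftrightarrow> (\<Sum>k\<in>UNIV. - t k) = 0" using e by (simp add: sum_negf) linarith
  also have "\<dots> \<longleftrightarrow> (\<forall>k. t k = 0)" using tn by (subst sum_nonneg_eq_0_iff) auto
  also have "\<dots> \<longleftrightarrow> (\<forall>k. b$k > 0 \<longrightarrow> x$k = m+2) \<and> (\<forall>k. b$k < 0 \<longrightarrow> x$k = m)"
  proof -
    have "t k = 0 \<longleftrightarrow> (b$k > 0 \<longrightarrow> x$k = m+2) \<and> (b$k < 0 \<longrightarrow> x$k = m)" for k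
    proof (cases "b$k > 0")
      case True
      hence "t k = b$k * (x$k - m - 2)" unfolding t_def by (simp add: algebra_simps)
      thus ?thesis using True by auto
    next
      case False
      hence "t k = b$k * (x$k - m)" unfolding t_def by simp
      thus ?thesis using False by auto
    qed
    thus ?thesis by blast
  qed
  finally show "b \<bullet> x = Mb b \<longleftrightarrow> (\<forall>k. b$k > 0 \<longrightarrow> x$k = m+2) \<and> (\<forall>k. b$k < 0 \<longrightarrow> x$k = m)" .
qed

lemma face_eq:
  fixes b :: "real^'n"
  assumes s: "(\<Sum>k\<in>UNIV. b$k) = 0"
  shows "\<forall>x\<in>range_poly. b \<bullet> x \<le> Mb b"
    and "range_poly \<inter> {x. b \<bullet> x = Mb b} = G {k. b$k > 0} {k. b$k < 0}"
proof -
  show "\<forall>x\<in>range_poly. b \<bullet> x \<le> Mb b" using core(1)[OF s] P_char by blast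
  show "range_poly \<inter> {x. b \<bullet> x = Mb b} = G {k. b$k > 0} {k. b$k < 0}"
  proof (intro set_eqI iffI)
    fix x assume "x \<in> range_poly \<inter> {x. b \<bullet> x = Mb b}"
    then obtain m where m: "\<forall>k. m \<le> x$k \<and> x$k \<le> m+2" and eq: "b \<bullet> x = Mb b"
      using P_char by blast
    show "x \<in> G {k. b$k > 0} {k. b$k < 0}"
      using core(2)[OF s m] eq m unfolding G_def by blast
  next
    fix x assume "x \<in> G {k. b$k > 0} {k. b$k < 0}"
    then obtain m where m: "\<forall>k. m \<le> x$k \<and> x$k \<le> m+2"
      and c: "(\<forall>k. b$k > 0 \<longrightarrow> x$k = m+2) \<and> (\<forall>k. b$k < 0 \<longrightarrow> x$k = m)"
      unfolding G_def by blast
    show "x \<in> range_poly \<inter> {x. b \<bullet> x = Mb b}"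
      using core(2)[OF s m] c m P_char by blast
  qed
qed

lemma G_mono:
  fixes S T S' T' :: "'n::finite set"
  assumes sub: "G S T \<subseteq> G S' T'" and d: "S \<inter> T = {}" and ne: "S' \<noteq> {}" "T' \<noteq> {}"
  shows "S' \<subseteq> S \<and> T' \<subseteq> T"
proof -
  define x :: "real^'n" where "x = (\<chi> k. if k \<in> S then 2 else 0)"
  define y :: "real^'n" where "y = (\<chi> k. if k \<in> T then 0 else 2)"
  have "x \<in> G S T" unfolding G_def x_def using d by (intro CollectI exI[of _ 0]) auto
  hence "x \<in> G S' T'" using sub by blast
  then obtain m where m: "\<forall>i\<in>S'. x$i = m+2" "\<forall>j\<in>T'. x$j = m" unfolding G_def by blast
  have "S' \<subseteq> S"
  proof
    fix i assume i: "i \<in> S'"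
    obtain j where j: "j \<in> T'" using ne by blast
    show "i \<in> S" using m i j unfolding x_def by (auto split: if_splits)
  qed
  have "y \<in> G S T" unfolding G_def y_def using d by (intro CollectI exI[of _ 0]) auto
  hence "y \<in> G S' T'" using sub by blast
  then obtain m where m: "\<forall>i\<in>S'. y$i = m+2" "\<forall>j\<in>T'. y$j = m" unfolding G_def by blast
  have "T' \<subseteq> T"
  proof
    fix j assume j: "j \<in> T'"
    obtain i where i: "i \<in> S'" using ne by blast
    show "j \<in> T" using m i j unfolding y_def by (auto split: if_splits)
  qed
  thus ?thesis using \<open>S' \<subseteq> S\<close> by blast
qed

lemma zero_P: "(0::real^'n) \<in> range_poly"
  unfolding P_char by (intro exI[of _ 0]) auto

lemma G_ne_P: fixes S T :: "'n::finite set" assumes "S \<noteq> {}" "T \<noteq> {}" shows "G S T \<noteq> range_poly"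
proof
  assume "G S T = range_poly"
  hence "0 \<in> G S T" using zero_P by blast
  then obtain m where m: "\<forall>i\<in>S. (0::real^'n)$i = m+2" "\<forall>j\<in>T. (0::real^'n)$j = m" unfolding G_def by blast
  obtain i j where "i \<in> S" "j \<in> T" using assms by blast
  thus False using m by force
qed

lemma face_G:
  assumes d: "S \<inter> T = {}" and ne: "S \<noteq> {}" "T \<noteq> {}"
  shows "poly_face (range_poly :: (real^'n) set) (G S T)"
proof -
  define b :: "real^'n" where
    "b = (\<chi> k. (if k \<in> S then real (card T) else 0) - (if k \<in> T then real (card S) else 0))"
  have cS: "card S > 0" and cT: "card T > 0" using ne by (auto simp: card_gt_0_iff)
  have sb: "(\<Sum>k\<in>UNIV. b$k) = 0"
    unfolding b_def by (simp add: sum_subtractf sum.If_cases)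
  have pos: "{k. b$k > 0} = S" unfolding b_def using d cS cT by auto
  have neg: "{k. b$k < 0} = T" unfolding b_def using d cS cT by auto
  have "(\<chi> k. if k \<in> S then 2 else 0) \<in> G S T" unfolding G_def using d
    by (intro CollectI exI[of _ 0]) auto
  hence "G S T \<noteq> {}" by blast
  moreover have "\<forall>x\<in>range_poly. b \<bullet> x \<le> Mb b" by (rule face_eq(1)[OF sb])
  moreover have "G S T = range_poly \<inter> {x. b \<bullet> x = Mb b}" using face_eq(2)[OF sb] pos neg by simp
  ultimately show ?thesis unfolding poly_face_def by blast
qed

lemma face_cases:
  assumes "poly_face (range_poly :: (real^'n) set) F"
  shows "F = range_poly \<or> (\<exists>S T. S \<inter> T = {} \<and> S \<noteq> {} \<and> T \<noteq> {} \<and> F = G S T)"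
proof (cases "F = range_poly")
  case True thus ?thesis by blast
next
  case False
  then obtain b c where bc: "\<forall>x\<in>range_poly. b \<bullet> x \<le> c" and F: "F = range_poly \<inter> {x. b \<bullet> x = c}"
    and Fne: "F \<noteq> {}" using assms unfolding poly_face_def by blast
  have sb: "(\<Sum>k\<in>UNIV. b$k) = 0"
  proof (rule ccontr)
    assume sn: "(\<Sum>k\<in>UNIV. b$k) \<noteq> 0"
    define t where "t = (c + 1) / (\<Sum>k\<in>UNIV. b$k)"
    have "(\<chi> k. t) \<in> (range_poly :: (real^'n) set)" unfolding P_char by (intro exI[of _ t]) auto
    hence "b \<bullet> (\<chi> k. t) \<le> c" using bc by blast
    moreover have "b \<bullet> (\<chi> k. t) = t * (\<Sum>k\<in>UNIV. b$k)"
      by (simp add: inner_vec_def sum_distrib_left mult.commute)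
    moreover have "t * (\<Sum>k\<in>UNIV. b$k) = c + 1" unfolding t_def using sn by simp
    ultimately show False by linarith
  qed
  show ?thesis
  proof (cases "b = 0")
    case True
    then obtain x where "x \<in> F" using Fne by blast
    hence "c = 0" using F True by (simp split: if_splits)
    hence "F = range_poly" using F True by auto
    thus ?thesis using False by blast
  next
    case bnz: False
    then obtain k0 where k0: "b$k0 \<noteq> 0" by (metis vec_eq_iff zero_index)
    let ?S = "{k. b$k > 0}" and ?T = "{k. b$k < 0}"
    have Sne: "?S \<noteq> {}"
    proof
      assume "?S = {}"
      hence "\<forall>k. - b$k \<ge> 0" by (auto simp: not_less)
      moreover have "(\<Sum>k\<in>UNIV. - b$k) = 0" using sb by (simp add: sum_negf)
      ultimately have "\<forall>k. - b$k = 0" by (subst (asm) sum_nonneg_eq_0_iff) auto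
      thus False using k0 by simp
    qed
    have Tne: "?T \<noteq> {}"
    proof
      assume "?T = {}"
      hence "\<forall>k. b$k \<ge> 0" by (auto simp: not_less)
      hence "\<forall>k. b$k = 0" using sb by (subst (asm) sum_nonneg_eq_0_iff) auto
      thus False using k0 by simp
    qed
    define x0 :: "real^'n" where "x0 = (\<chi> k. if b$k > 0 then 2 else 0)"
    have "x0 \<in> G ?S ?T" unfolding G_def x0_def by (intro CollectI exI[of _ 0]) auto
    hence "x0 \<in> range_poly \<and> b \<bullet> x0 = Mb b" using face_eq(2)[OF sb] by blast
    hence "Mb b \<le> c" using bc by metis
    moreover obtain y where "y \<in> F" using Fne by blast
    hence "c \<le> Mb b" using F face_eq(1)[OF sb] by force
    ultimately have "c = Mb b" by linarith
    hence "F = G ?S ?T" using F face_eq(2)[OF sb] by simp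
    moreover have "?S \<inter> ?T = {}" by auto
    ultimately show ?thesis using Sne Tne by blast
  qed
qed

lemma card_sets: "card (UNIV :: 'n::finite set set) = 2 ^ CARD('n)"
  using card_Pow[of "UNIV :: 'n set"] by simp

lemma card_disj: "card {(S,T). S \<inter> T = ({}::'n::finite set)} = 3 ^ CARD('n)"
proof -
  let ?A = "PiE (UNIV :: 'n set) (\<lambda>_. {0,1,2::nat})"
  let ?h = "\<lambda>f. ({i. f i = 0}, {i. f i = (1::nat)})"
  have c3: "card {0,1,2::nat} = 3" by simp
  have "card ?A = card {0,1,2::nat} ^ CARD('n)" by (rule card_funcsetE) simp
  hence cA: "card ?A = 3 ^ CARD('n)" unfolding c3 .
  have inj: "inj_on ?h ?A"
  proof (rule inj_onI)
    fix f g assume f: "f \<in> ?A" and g: "g \<in> ?A" and e: "?h f = ?h g"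
    show "f = g"
    proof
      fix i
      have "f i \<in> {0,1,2}" "g i \<in> {0,1,2}" using f g by (auto simp: PiE_iff)
      moreover have "f i = 0 \<longleftrightarrow> g i = 0" "f i = 1 \<longleftrightarrow> g i = 1" using e by (auto simp: set_eq_iff)
      ultimately show "f i = g i" by auto
    qed
  qed
  have img: "?h ` ?A = {(S,T). S \<inter> T = {}}"
  proof (intro set_eqI iffI)
    fix p assume "p \<in> ?h ` ?A" thus "p \<in> {(S,T). S \<inter> T = {}}" by auto
  next
    fix p assume "p \<in> {(S,T). S \<inter> T = ({}::'n set)}"
    then obtain S T where p: "p = (S,T)" and d: "S \<inter> T = {}" by blast
    define f where "f i = (if i \<in> S then 0 else if i \<in> T then 1 else (2::nat))" for i
    have "f \<in> ?A" unfolding f_def by (auto simp: PiE_iff)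
    moreover have "?h f = (S,T)" unfolding f_def using d by auto
    ultimately show "p \<in> ?h ` ?A" using p by force
  qed
  show ?thesis using card_image[OF inj] img cA by simp
qed

lemma card_D: "int (card {(S,T). S \<inter> T = ({}::'n::finite set) \<and> S \<noteq> {} \<and> T \<noteq> {}})
   = 3 ^ CARD('n) - 2 ^ (CARD('n) + 1) + 1"
proof -
  let ?D = "{(S,T). S \<inter> T = ({}::'n set) \<and> S \<noteq> {} \<and> T \<noteq> {}}"
  let ?A = "{{}::'n set} \<times> (UNIV :: 'n set set)" and ?B = "(UNIV :: 'n set set) \<times> {{}::'n set}"
  have u: "{(S,T). S \<inter> T = ({}::'n set)} = ?D \<union> (?A \<union> ?B)" by auto
  have "card {(S,T). S \<inter> T = ({}::'n set)} = card ?D + card (?A \<union> ?B)"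
    unfolding u by (rule card_Un_disjoint) auto
  moreover have "card ?A + card ?B = card (?A \<union> ?B) + card (?A \<inter> ?B)"
    by (rule card_Un_Int) simp_all
  moreover have "?A \<inter> ?B = {({},{})}" by auto
  moreover have "card ?A = 2 ^ CARD('n)" "card ?B = 2 ^ CARD('n)"
    by (simp_all add: card_cartesian_product card_sets)
  ultimately have "card ?D + 2 * 2 ^ CARD('n) = 3 ^ CARD('n) + 1"
    using card_disj[where 'n='n] by simp
  hence "int (card ?D + 2 * 2 ^ CARD('n)) = int (3 ^ CARD('n) + 1)" by (rule arg_cong)
  hence "int (card ?D) + 2 * 2 ^ CARD('n) = 3 ^ CARD('n) + 1" by simp
  thus ?thesis by (simp add: power_add algebra_simps)
qed

theorem corollary1:
  shows "finite {F. poly_face (range_poly :: (real^'n) set) F} \<and>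
         int (card {F. poly_face (range_poly :: (real^'n) set) F})
           = 3 ^ CARD('n) - 2 ^ (CARD('n) + 1) + 2"
proof -
  let ?D = "{(S,T). S \<inter> T = ({}::'n set) \<and> S \<noteq> {} \<and> T \<noteq> {}}"
  let ?P = "range_poly :: (real^'n) set"
  have eq: "{F. poly_face ?P F} = insert ?P ((\<lambda>(S,T). G S T) ` ?D)"
  proof (intro set_eqI iffI)
    fix F assume "F \<in> {F. poly_face ?P F}"
    thus "F \<in> insert ?P ((\<lambda>(S,T). G S T) ` ?D)" using face_cases[of F] by auto
  next
    fix F assume "F \<in> insert ?P ((\<lambda>(S,T). G S T) ` ?D)"
    moreover have "poly_face ?P ?P" unfolding poly_face_def using zero_P by blast
    ultimately show "F \<in> {F. poly_face ?P F}" using face_G by auto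
  qed
  have inj: "inj_on (\<lambda>(S,T). G S T) ?D"
  proof (rule inj_onI)
    fix p q assume p: "p \<in> ?D" and q: "q \<in> ?D" and e: "(\<lambda>(S,T). G S T) p = (\<lambda>(S,T). G S T) q"
    obtain S T S' T' where pq: "p = (S,T)" "q = (S',T')" by fastforce
    have "S' \<subseteq> S \<and> T' \<subseteq> T" using G_mono[of S T S' T'] e p q pq by auto
    moreover have "S \<subseteq> S' \<and> T \<subseteq> T'" using G_mono[of S' T' S T] e p q pq by auto
    ultimately show "p = q" using pq by auto
  qed
  have notin: "?P \<notin> (\<lambda>(S,T). G S T) ` ?D"
  proof
    assume "?P \<in> (\<lambda>(S,T). G S T) ` ?D"
    then obtain p where e: "?P = (\<lambda>(S,T). G S T) p" and p: "p \<in> ?D" by (rule imageE)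
    obtain S T where pq: "p = (S,T)" by fastforce
    have "S \<noteq> {}" "T \<noteq> {}" using p pq by auto
    from G_ne_P[OF this] show False using e pq by simp
  qed
  have finD: "finite ?D" by simp
  have finI: "finite ((\<lambda>(S,T). G S T) ` ?D)" using finD by (rule finite_imageI)
  have "card (insert ?P ((\<lambda>(S,T). G S T) ` ?D)) = Suc (card ((\<lambda>(S,T). G S T) ` ?D))"
    using finI notin by (rule card_insert_disjoint)
  also have "card ((\<lambda>(S,T). G S T) ` ?D) = card ?D" using inj by (rule card_image)
  finally have "card {F. poly_face ?P F} = card ?D + 1" unfolding eq by simp
  hence "int (card {F. poly_face ?P F}) = int (card ?D) + 1" by simp
  also have "\<dots> = 3 ^ CARD('n) - 2 ^ (CARD('n) + 1) + 2" using card_D[where 'n='n] by simp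
  finally have c: "int (card {F. poly_face ?P F}) = 3 ^ CARD('n) - 2 ^ (CARD('n) + 1) + 2" .
  have "finite {F. poly_face ?P F}" unfolding eq using finI by (rule finite.insertI)
  thus ?thesis using c by blast
qed

end
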